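(* Let $\mathcal H$ be a separable complex Hilbert space, $A\in L(\mathcal H)^+$ and $B\in L(\mathcal H)$ with closed range. Then $B$ admits an $A$-inverse if and only if the pair $(A,R(B))$ is compatible.
   Context: $\|z\|_A=\langle Az,z\rangle^{1/2}$. $G\in L(\mathcal H)$ is an $A$-inverse of $B$ if for every $y\in\mathcal H$, $\|y-BGy\|_A\le\|y-Bx\|_A$ for all $x\in\mathcal H$. $(A,\mathcal S)$ is compatible if there exists $Q\in L(\mathcal H)$ with $Q^2=Q$, $R(Q)=\mathcal S$, $AQ=Q^*A$. *)

theory Defs
  imports "HOL-Analysis.Analysis"
begin

class complex_inner = real_normed_vector +
  fixes scaleC :: "complex \<Rightarrow> 'a \<Rightarrow> 'a"
    and cinner :: "'a \<Rightarrow> 'a \<Rightarrow> complex"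
  assumes scaleC_add_left: "scaleC (a + b) x = scaleC a x + scaleC b x"
    and scaleC_add_right: "scaleC a (x + y) = scaleC a x + scaleC a y"
    and scaleC_scaleC: "scaleC a (scaleC b x) = scaleC (a * b) x"
    and scaleC_one: "scaleC 1 x = x"
    and scaleR_scaleC: "scaleR r x = scaleC (complex_of_real r) x"
    and cinner_commute: "cinner x y = cnj (cinner y x)"
    and cinner_add_left: "cinner (x + y) z = cinner x z + cinner y z"
    and cinner_scaleC_left: "cinner (scaleC c x) y = c * cinner x y"
    and cinner_self_real: "Im (cinner x x) = 0"
    and cinner_self_nonneg: "0 \<le> Re (cinner x x)"
    and cinner_self_zero: "cinner x x = 0 \<longleftrightarrow> x = 0"
    and norm_cinner: "norm x = sqrt (Re (cinner x x))"

class complex_hilbert = complex_inner + complete_space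

definition separable_type :: "'a::topological_space itself \<Rightarrow> bool" where
  "separable_type _ \<longleftrightarrow> (\<exists>D::'a set. countable D \<and> closure D = UNIV)"

definition bounded_clinear :: "('a::complex_inner \<Rightarrow> 'b::complex_inner) \<Rightarrow> bool" where
  "bounded_clinear T \<longleftrightarrow> bounded_linear T \<and> (\<forall>c x. T (scaleC c x) = scaleC c (T x))"

text \<open>Hilbert adjoint (exists and is unique for bounded operators, by Riesz).\<close>

definition cadjoint :: "('a::complex_inner \<Rightarrow> 'a) \<Rightarrow> ('a \<Rightarrow> 'a)" where
  "cadjoint T = (SOME S. \<forall>x y. cinner (T x) y = cinner x (S y))"

definition positive_op :: "('a::complex_inner \<Rightarrow> 'a) \<Rightarrow> bool" where
  "positive_op A \<longleftrightarrow> bounded_clinear A \<and>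
     (\<forall>x. Im (cinner (A x) x) = 0 \<and> 0 \<le> Re (cinner (A x) x))"

definition A_norm :: "('a::complex_inner \<Rightarrow> 'a) \<Rightarrow> 'a \<Rightarrow> real" where
  "A_norm A z = sqrt (Re (cinner (A z) z))"

definition is_A_inverse :: "('a::complex_inner \<Rightarrow> 'a) \<Rightarrow> ('a \<Rightarrow> 'a) \<Rightarrow> ('a \<Rightarrow> 'a) \<Rightarrow> bool" where
  "is_A_inverse A B G \<longleftrightarrow> bounded_clinear G \<and>
     (\<forall>y x. A_norm A (y - B (G y)) \<le> A_norm A (y - B x))"

definition compatible :: "('a::complex_inner \<Rightarrow> 'a) \<Rightarrow> 'a set \<Rightarrow> bool" where
  "compatible A S \<longleftrightarrow> (\<exists>Q. bounded_clinear Q \<and> Q \<circ> Q = Q \<and> range Q = S \<and>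
      A \<circ> Q = cadjoint Q \<circ> A)"

end

theory Submission
  imports Defs
begin


lemma cinner_zero_left[simp]: "cinner 0 (y::'a::complex_inner) = 0"
  using cinner_add_left[of "0::'a" 0 y] by simp

lemma cinner_add_right: "cinner (x::'a::complex_inner) (y + z) = cinner x y + cinner x z"
  using cinner_commute[of x "y + z"] cinner_commute[of x y] cinner_commute[of x z] by (simp add: cinner_add_left)

lemma cinner_zero_right[simp]: "cinner (x::'a::complex_inner) 0 = 0"
  using cinner_commute[of x 0] by simp

lemma cinner_minus_left: "cinner (- x) (y::'a::complex_inner) = - cinner x y"
  using cinner_add_left[of x "-x" y] by (simp add: eq_neg_iff_add_eq_0 add.commute)

lemma cinner_diff_left: "cinner (x - z) (y::'a::complex_inner) = cinner x y - cinner z y"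
  unfolding diff_conv_add_uminus by (simp only: cinner_add_left cinner_minus_left)

lemma cinner_minus_right: "cinner (x::'a::complex_inner) (- y) = - cinner x y"
  using cinner_commute[of x "- y"] cinner_commute[of x y] by (simp add: cinner_minus_left)

lemma cinner_diff_right: "cinner (x::'a::complex_inner) (y - z) = cinner x y - cinner x z"
  unfolding diff_conv_add_uminus by (simp only: cinner_add_right cinner_minus_right)

lemma cinner_scaleC_right': "cinner (x::'a::complex_inner) (scaleC c y) = cnj c * cinner x y"
  using cinner_commute[of x "scaleC c y"] cinner_commute[of x y] by (simp add: cinner_scaleC_left)

lemma cinner_scaleR_left: "cinner (scaleR r x) (y::'a::complex_inner) = of_real r * cinner x y"
  by (simp add: scaleR_scaleC cinner_scaleC_left)

lemma cinner_scaleR_right: "cinner (x::'a::complex_inner) (scaleR r y) = of_real r * cinner x y"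
  by (simp add: scaleR_scaleC cinner_scaleC_right')

lemma norm_sq_cinner: "(norm (x::'a::complex_inner))^2 = Re (cinner x x)"
  by (simp add: norm_cinner cinner_self_nonneg)

lemma cinner_self_eq: "cinner (x::'a::complex_inner) x = complex_of_real ((norm x)^2)"
  by (simp add: norm_sq_cinner complex_eq_iff cinner_self_real)

lemma Re_cinner_sym: "Re (cinner (x::'a::complex_inner) y) = Re (cinner y x)"
  by (subst cinner_commute) simp

lemma norm_add_sq: "(norm ((x::'a::complex_inner) + y))^2 = (norm x)^2 + (norm y)^2 + 2 * Re (cinner x y)"
  by (simp add: norm_sq_cinner cinner_add_left cinner_add_right Re_cinner_sym[of y x])

lemma norm_diff_sq: "(norm ((x::'a::complex_inner) - y))^2 = (norm x)^2 + (norm y)^2 - 2 * Re (cinner x y)"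
  by (simp add: norm_sq_cinner cinner_diff_left cinner_diff_right Re_cinner_sym[of y x])

lemma cinner_ext_right: assumes "\<And>z. cinner z a = cinner z (b::'a::complex_inner)" shows "a = b"
proof -
  have "cinner (a - b) (a - b) = cinner (a - b) a - cinner (a - b) b" by (rule cinner_diff_right)
  also have "\<dots> = 0" using assms[of "a - b"] by simp
  finally have "cinner (a - b) (a - b) = 0" .
  thus ?thesis using cinner_self_zero[of "a - b"] by simp
qed

lemma scaleC_zero_left[simp]: "scaleC 0 (x::'a::complex_inner) = 0"
  using scaleC_add_left[of 0 0 x] by simp

lemma scaleC_zero_right[simp]: "scaleC c (0::'a::complex_inner) = 0"
  using scaleC_add_right[of c "0::'a" 0] by simp

lemma scaleC_minus_right: "scaleC c (- x::'a::complex_inner) = - scaleC c x"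
  using scaleC_add_right[of c x "-x"] by (simp add: eq_neg_iff_add_eq_0 add.commute)

lemma scaleC_diff_right: "scaleC c (x - y::'a::complex_inner) = scaleC c x - scaleC c y"
  unfolding diff_conv_add_uminus by (simp only: scaleC_add_right scaleC_minus_right)

lemma norm_scaleC: "norm (scaleC c (x::'a::complex_inner)) = cmod c * norm x"
proof -
  have "cinner (scaleC c x) (scaleC c x) = (c * cnj c) * cinner x x"
    by (simp add: cinner_scaleC_left cinner_scaleC_right' mult.assoc)
  also have "\<dots> = of_real ((cmod c)^2 * (norm x)^2)"
    by (simp only: complex_norm_square[symmetric] cinner_self_eq of_real_mult)
  finally have "(norm (scaleC c x))^2 = (cmod c * norm x)^2"
    by (simp add: norm_sq_cinner power_mult_distrib)
  thus ?thesis by (rule power2_eq_imp_eq) auto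
qed

lemma cauchy_schwarz: "cmod (cinner (x::'a::complex_inner) y) \<le> norm x * norm y"
proof (cases "y = 0")
  case True thus ?thesis by simp
next
  case False
  define c where "c = cinner x y / cinner y y"
  define z where "z = x - scaleC c y"
  have ny: "norm y \<noteq> 0" using False by simp
  have yy: "cinner y y \<noteq> 0" using False cinner_self_zero[of y] by simp
  have zy: "cinner z y = 0" unfolding z_def c_def
    using yy by (simp add: cinner_diff_left cinner_scaleC_left)
  have x: "x = z + scaleC c y" by (simp add: z_def)
  have "(norm x)^2 = (norm z)^2 + (norm (scaleC c y))^2 + 2 * Re (cinner z (scaleC c y))"
    using norm_add_sq[of z "scaleC c y"] x by simp
  also have "cinner z (scaleC c y) = 0" by (simp add: cinner_scaleC_right' zy)
  finally have "(norm x)^2 = (norm z)^2 + (cmod c * norm y)^2" by (simp add: norm_scaleC)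
  hence "(cmod c * norm y)^2 \<le> (norm x)^2" by simp
  hence cx: "cmod c * norm y \<le> norm x" by (rule power2_le_imp_le) simp
  have "cmod (cinner x y) = cmod c * cmod (cinner y y)"
    using yy by (simp add: c_def norm_divide)
  also have "cmod (cinner y y) = norm y * norm y"
    by (simp add: cinner_self_eq power2_eq_square norm_mult)
  finally have "cmod (cinner x y) = (cmod c * norm y) * norm y" by (simp add: mult.assoc)
  also have "\<dots> \<le> norm x * norm y" using cx by (rule mult_right_mono) simp
  finally show ?thesis .
qed

lemma bounded_linear_cinner_left: "bounded_linear (\<lambda>x::'a::complex_inner. cinner x y)"
  by (rule bounded_linear_intro[where K="norm y"])
     (auto simp: cinner_add_left cinner_scaleR_left cauchy_schwarz scaleR_conv_of_real)




lemma scaleC_minus1: "scaleC (-1) (x::'a::complex_inner) = - x"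
  using scaleC_add_left[of 1 "-1" x] by (simp add: scaleC_one eq_neg_iff_add_eq_0 add.commute)

definition csubspace :: "'a::complex_inner set \<Rightarrow> bool" where
  "csubspace M \<longleftrightarrow> 0 \<in> M \<and> (\<forall>x\<in>M. \<forall>y\<in>M. x + y \<in> M) \<and> (\<forall>c. \<forall>x\<in>M. scaleC c x \<in> M)"

lemma csubspace_0: "csubspace M \<Longrightarrow> 0 \<in> M" by (simp add: csubspace_def)
lemma csubspace_add: "csubspace M \<Longrightarrow> x \<in> M \<Longrightarrow> y \<in> M \<Longrightarrow> x + y \<in> M" by (simp add: csubspace_def)
lemma csubspace_scaleC: "csubspace M \<Longrightarrow> x \<in> M \<Longrightarrow> scaleC c x \<in> M" by (simp add: csubspace_def)
lemma csubspace_minus: "csubspace M \<Longrightarrow> x \<in> M \<Longrightarrow> - x \<in> M"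
  by (metis csubspace_scaleC scaleC_minus1)
lemma csubspace_diff: "csubspace M \<Longrightarrow> x \<in> M \<Longrightarrow> y \<in> M \<Longrightarrow> x - y \<in> M"
  by (metis csubspace_add csubspace_minus diff_conv_add_uminus)
lemma csubspace_scaleR: "csubspace M \<Longrightarrow> x \<in> M \<Longrightarrow> scaleR r x \<in> M"
  by (simp add: csubspace_scaleC scaleR_scaleC)

lemma core_zero:
  fixes \<alpha> :: complex and \<beta> :: real
  assumes "\<And>c. 2 * Re (cnj c * \<alpha>) \<le> (cmod c)^2 * \<beta>"
  shows "\<alpha> = 0"
proof -
  define t where "t = 1 / (\<bar>\<beta>\<bar> + 1)"
  have t0: "0 < t" by (simp add: t_def add_pos_nonneg)
  have tb: "t * \<beta> < 1" unfolding t_def by (simp add: field_simps)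
  have h: "2 * Re (cnj (of_real t * \<alpha>) * \<alpha>) \<le> (cmod (of_real t * \<alpha>))^2 * \<beta>" by (rule assms)
  have e1: "Re (cnj (of_real t * \<alpha>) * \<alpha>) = t * (cmod \<alpha>)^2"
    by (simp add: mult.assoc complex_norm_square[symmetric] mult.commute[of "cnj \<alpha>"])
  have e2: "(cmod (of_real t * \<alpha>))^2 = t^2 * (cmod \<alpha>)^2"
    using t0 by (simp add: norm_mult power_mult_distrib)
  have "2 * t * (cmod \<alpha>)^2 \<le> t * (cmod \<alpha>)^2 * (t * \<beta>)"
    using h e1 e2 by (simp add: power2_eq_square mult_ac)
  hence "2 * (cmod \<alpha>)^2 \<le> (cmod \<alpha>)^2 * (t * \<beta>)" using t0
    by (simp add: mult.assoc)
  moreover have "(cmod \<alpha>)^2 * (t * \<beta>) \<le> (cmod \<alpha>)^2" using tb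
    by (simp add: mult_left_le)
  ultimately have "(cmod \<alpha>)^2 \<le> 0" by linarith
  thus ?thesis by simp
qed

lemma variational:
  fixes A :: "'a::complex_inner \<Rightarrow> 'a"
  assumes lin: "linear A" and hC: "\<And>c x. A (scaleC c x) = scaleC c (A x)"
    and herm: "\<And>x y. cinner (A x) y = cnj (cinner (A y) x)"
    and S: "csubspace S"
    and mn: "\<And>w. w \<in> S \<Longrightarrow> Re (cinner (A r) r) \<le> Re (cinner (A (r - w)) (r - w))"
    and w: "w \<in> S"
  shows "cinner (A r) w = 0"
proof -
  have "2 * Re (cnj c * cinner (A r) w) \<le> (cmod c)^2 * Re (cinner (A w) w)" for c
  proof -
    define v where "v = scaleC c w"
    have vS: "v \<in> S" using S w by (simp add: v_def csubspace_scaleC)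
    have e: "cinner (A (r - v)) (r - v) = cinner (A r) r - cinner (A r) v - cinner (A v) r + cinner (A v) v"
      using linear_diff[OF lin] by (simp add: cinner_diff_left cinner_diff_right)
    have e2: "Re (cinner (A v) r) = Re (cinner (A r) v)" using herm[of v r] by simp
    have e3: "cinner (A r) v = cnj c * cinner (A r) w" by (simp add: v_def cinner_scaleC_right')
    have "cinner (A v) v = c * (cnj c * cinner (A w) w)"
      by (simp add: v_def hC cinner_scaleC_left cinner_scaleC_right')
    also have "\<dots> = of_real ((cmod c)^2) * cinner (A w) w"
      by (simp only: complex_norm_square mult.assoc)
    finally have e4: "cinner (A v) v = of_real ((cmod c)^2) * cinner (A w) w" .
    have "Re (cinner (A v) v) = (cmod c)^2 * Re (cinner (A w) w)" using e4 by simp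
    with mn[OF vS] e e2 e3 show ?thesis by simp
  qed
  thus ?thesis by (rule core_zero)
qed

lemma proj_exists:
  fixes M :: "'a::complex_hilbert set" and x :: 'a
  assumes cl: "closed M" and S: "csubspace M"
  shows "\<exists>p\<in>M. \<forall>m\<in>M. cinner (x - p) m = 0"
proof -
  define d where "d = Inf ((\<lambda>m. norm (x - m)) ` M)"
  have ne: "M \<noteq> {}" using S csubspace_def by auto
  have bdd: "bdd_below ((\<lambda>m. norm (x - m)) ` M)" by (rule bdd_belowI[where m=0]) auto
  have dle: "d \<le> norm (x - m)" if "m \<in> M" for m unfolding d_def using bdd that by (auto intro: cInf_lower)
  have d0: "0 \<le> d" unfolding d_def using ne by (auto intro: cInf_greatest)
  have "\<exists>m\<in>M. (norm (x - m))^2 < d^2 + inverse (real (Suc n))" for n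
  proof -
    have "d < sqrt (d^2 + inverse (real (Suc n)))" using d0 by (intro real_less_rsqrt) simp
    then obtain m where m: "m \<in> M" "norm (x - m) < sqrt (d^2 + inverse (real (Suc n)))"
      using cInf_lessD[of "(\<lambda>m. norm (x - m)) ` M"] ne unfolding d_def by auto
    have "(norm (x - m))^2 < (sqrt (d^2 + inverse (real (Suc n))))^2"
      using m(2) by (intro power_strict_mono) auto
    also have "\<dots> = d^2 + inverse (real (Suc n))" by (simp add: add_nonneg_nonneg)
    finally show ?thesis using m(1) by blast
  qed
  then obtain s where s: "\<And>n. s n \<in> M" "\<And>n. (norm (x - s n))^2 < d^2 + inverse (real (Suc n))"
    by metis
  have est: "(norm (s i - s j))^2 < 2 * inverse (real (Suc i)) + 2 * inverse (real (Suc j))" for i j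
  proof -
    define a where "a = x - s i"
    define b where "b = x - s j"
    have mid: "(1/2) *\<^sub>R (s i + s j) \<in> M" using S s(1) by (intro csubspace_scaleR csubspace_add)
    have par: "(norm (a + b))^2 + (norm (a - b))^2 = 2*(norm a)^2 + 2*(norm b)^2"
      using norm_add_sq[of a b] norm_diff_sq[of a b] by simp
    have "a + b = 2 *\<^sub>R (x - (1/2) *\<^sub>R (s i + s j))" unfolding a_def b_def by (simp add: algebra_simps scaleR_2)
    hence "norm (a + b) = 2 * norm (x - (1/2) *\<^sub>R (s i + s j))" by simp
    hence "2 * d \<le> norm (a + b)" using dle[OF mid] by simp
    hence "(2 * d)^2 \<le> (norm (a + b))^2" using d0 by (intro power_mono) auto
    moreover have "norm (a - b) = norm (s i - s j)" unfolding a_def b_def by (simp add: norm_minus_commute)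
    ultimately show ?thesis using par s(2)[of i] s(2)[of j] unfolding a_def b_def by (simp add: power_mult_distrib)
  qed
  have "Cauchy s"
  proof (rule metric_CauchyI)
    fix e :: real assume e: "0 < e"
    obtain N :: nat where N: "4 / e^2 < real N" using reals_Archimedean2 by blast
    show "\<exists>M. \<forall>m\<ge>M. \<forall>n\<ge>M. dist (s m) (s n) < e"
    proof (intro exI allI impI)
      fix i j assume ij: "N \<le> i" "N \<le> j"
      have i: "inverse (real (Suc i)) \<le> inverse (real (Suc N))" using ij by (simp add: le_imp_inverse_le)
      have j: "inverse (real (Suc j)) \<le> inverse (real (Suc N))" using ij by (simp add: le_imp_inverse_le)
      have "4 / e^2 < real (Suc N)" using N by simp
      hence "4 < e^2 * real (Suc N)" using e by (simp add: field_simps)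
      hence "4 * inverse (real (Suc N)) < e^2" by (simp add: field_simps)
      hence "(norm (s i - s j))^2 < e^2" using est[of i j] i j by linarith
      hence "(dist (s i) (s j))^2 < e^2" by (simp add: dist_norm)
      thus "dist (s i) (s j) < e" using e by (simp add: power_less_imp_less_base)
    qed
  qed
  then obtain p where p: "s \<longlonglongrightarrow> p" using Cauchy_convergent_iff convergent_def by blast
  have pM: "p \<in> M" using closed_sequentially[OF cl] s(1) p by blast
  have "(\<lambda>n. (norm (x - s n))^2) \<longlonglongrightarrow> (norm (x - p))^2" by (intro tendsto_intros p)
  moreover have "(\<lambda>n. d^2 + inverse (real (Suc n))) \<longlonglongrightarrow> d^2 + 0"
    by (intro tendsto_add tendsto_const LIMSEQ_inverse_real_of_nat)
  ultimately have pd: "(norm (x - p))^2 \<le> d^2"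
    using s(2) by (intro LIMSEQ_le) (auto intro: less_imp_le)
  have pmin: "Re (cinner (id (x - p)) (x - p)) \<le> Re (cinner (id (x - p - w)) (x - p - w))" if "w \<in> M" for w
  proof -
    have "p + w \<in> M" using S pM that by (rule csubspace_add)
    hence "d \<le> norm (x - (p + w))" by (rule dle)
    hence "d^2 \<le> (norm (x - (p + w)))^2" using d0 by (intro power_mono) auto
    hence "(norm (x - p))^2 \<le> (norm (x - (p + w)))^2" using pd by linarith
    thus ?thesis by (simp only: norm_sq_cinner diff_diff_eq id_apply)
  qed
  have h1: "\<And>c x. id (scaleC c x) = scaleC c (id x)" by simp
  have h2: "\<And>x y. cinner (id x) y = cnj (cinner (id y) (x::'a))" unfolding id_def by (rule cinner_commute)
  have "cinner (id (x - p)) m = 0" if "m \<in> M" for m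
    by (rule variational[OF linear_id h1 h2 S pmin that])
  with pM show ?thesis by auto
qed



definition cproj :: "'a::complex_inner set \<Rightarrow> 'a \<Rightarrow> 'a" where
  "cproj M x = (SOME p. p \<in> M \<and> (\<forall>m\<in>M. cinner (x - p) m = 0))"

lemma cproj:
  fixes M :: "'a::complex_hilbert set"
  assumes "closed M" "csubspace M"
  shows "cproj M x \<in> M" "m \<in> M \<Longrightarrow> cinner (x - cproj M x) m = 0"
proof -
  have "\<exists>p. p \<in> M \<and> (\<forall>m\<in>M. cinner (x - p) m = 0)" using proj_exists[OF assms] by blast
  hence "cproj M x \<in> M \<and> (\<forall>m\<in>M. cinner (x - cproj M x) m = 0)" unfolding cproj_def by (rule someI_ex)
  thus "cproj M x \<in> M" "m \<in> M \<Longrightarrow> cinner (x - cproj M x) m = 0" by auto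
qed

lemma cproj_unique:
  fixes M :: "'a::complex_hilbert set"
  assumes cl: "closed M" and S: "csubspace M" and p: "p \<in> M"
    and o: "\<And>m. m \<in> M \<Longrightarrow> cinner (x - p) m = 0"
  shows "cproj M x = p"
proof -
  let ?q = "cproj M x"
  have qM: "?q \<in> M" by (rule cproj(1)[OF cl S])
  have d: "p - ?q \<in> M" using S p qM by (rule csubspace_diff)
  have e: "p - ?q = (x - ?q) - (x - p)" by simp
  have "cinner (p - ?q) (p - ?q) = cinner (x - ?q) (p - ?q) - cinner (x - p) (p - ?q)"
    by (subst e, rule cinner_diff_left)
  also have "\<dots> = 0" using cproj(2)[OF cl S d] o[OF d] by simp
  finally have "p - ?q = 0" using cinner_self_zero[of "p - ?q"] by simp
  thus ?thesis by simp
qed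

lemma cproj_fixed:
  fixes M :: "'a::complex_hilbert set"
  assumes "closed M" "csubspace M" "m \<in> M" shows "cproj M m = m"
  by (rule cproj_unique[OF assms]) simp

lemma cproj_add:
  fixes M :: "'a::complex_hilbert set"
  assumes cl: "closed M" and S: "csubspace M"
  shows "cproj M (x + y) = cproj M x + cproj M y"
proof (rule cproj_unique[OF cl S])
  show "cproj M x + cproj M y \<in> M" using cproj(1)[OF cl S] S by (simp add: csubspace_add)
  fix m assume m: "m \<in> M"
  have e: "x + y - (cproj M x + cproj M y) = (x - cproj M x) + (y - cproj M y)" by simp
  show "cinner (x + y - (cproj M x + cproj M y)) m = 0"
    by (subst e) (simp add: cinner_add_left cproj(2)[OF cl S m])
qed

lemma cproj_scaleC:
  fixes M :: "'a::complex_hilbert set"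
  assumes cl: "closed M" and S: "csubspace M"
  shows "cproj M (scaleC c x) = scaleC c (cproj M x)"
proof (rule cproj_unique[OF cl S])
  show "scaleC c (cproj M x) \<in> M" using cproj(1)[OF cl S] S by (simp add: csubspace_scaleC)
  fix m assume m: "m \<in> M"
  have e: "scaleC c x - scaleC c (cproj M x) = scaleC c (x - cproj M x)" by (simp add: scaleC_diff_right)
  show "cinner (scaleC c x - scaleC c (cproj M x)) m = 0"
    by (subst e) (simp add: cinner_scaleC_left cproj(2)[OF cl S m])
qed

lemma cproj_pyth:
  fixes M :: "'a::complex_hilbert set"
  assumes cl: "closed M" and S: "csubspace M"
  shows "(norm x)^2 = (norm (x - cproj M x))^2 + (norm (cproj M x))^2"
proof -
  have "x = (x - cproj M x) + cproj M x" by simp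
  hence "(norm x)^2 = (norm (x - cproj M x))^2 + (norm (cproj M x))^2 + 2 * Re (cinner (x - cproj M x) (cproj M x))"
    by (metis norm_add_sq)
  thus ?thesis using cproj[OF cl S] by simp
qed

lemma cproj_norm:
  fixes M :: "'a::complex_hilbert set"
  assumes cl: "closed M" and S: "csubspace M"
  shows "norm (cproj M x) \<le> norm x" "norm (x - cproj M x) \<le> norm x"
proof -
  have p: "(norm x)^2 = (norm (x - cproj M x))^2 + (norm (cproj M x))^2" by (rule cproj_pyth[OF cl S])
  have "(norm (cproj M x))^2 \<le> (norm x)^2" using p by simp
  thus "norm (cproj M x) \<le> norm x" by (rule power2_le_imp_le) simp
  have "(norm (x - cproj M x))^2 \<le> (norm x)^2" using p by simp
  thus "norm (x - cproj M x) \<le> norm x" by (rule power2_le_imp_le) simp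
qed

lemma bounded_clinear_intro:
  assumes "\<And>x y. f (x + y) = f x + f y" "\<And>c x. f (scaleC c x) = scaleC c (f x)"
    "\<And>x. norm (f x) \<le> norm x * K"
  shows "bounded_clinear f"
  unfolding bounded_clinear_def using assms by (auto intro!: bounded_linear_intro[where K=K] simp: scaleR_scaleC)

lemma bcl_bl: "bounded_clinear f \<Longrightarrow> bounded_linear f"
  by (simp add: bounded_clinear_def)

lemma bcl_scaleC: "bounded_clinear f \<Longrightarrow> f (scaleC c x) = scaleC c (f x)"
  by (simp add: bounded_clinear_def)

lemma bcl_compose: "bounded_clinear f \<Longrightarrow> bounded_clinear g \<Longrightarrow> bounded_clinear (\<lambda>x. f (g x))"
  unfolding bounded_clinear_def using bounded_linear_compose by auto

lemma bcl_add: "bounded_clinear f \<Longrightarrow> bounded_clinear g \<Longrightarrow> bounded_clinear (\<lambda>x. f x + g x)"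
  unfolding bounded_clinear_def using bounded_linear_add by (auto simp: scaleC_add_right)

lemma bcl_diff: "bounded_clinear f \<Longrightarrow> bounded_clinear g \<Longrightarrow> bounded_clinear (\<lambda>x. f x - g x)"
  unfolding bounded_clinear_def using bounded_linear_sub by (auto simp: scaleC_diff_right)

lemma bcl_id: "bounded_clinear (\<lambda>x. x)"
  unfolding bounded_clinear_def by (simp add: bounded_linear_ident)

lemma bcl_cproj:
  fixes M :: "'a::complex_hilbert set"
  assumes cl: "closed M" and S: "csubspace M"
  shows "bounded_clinear (cproj M)"
  by (rule bounded_clinear_intro[where K=1]) (auto simp: cproj_add[OF cl S] cproj_scaleC[OF cl S] cproj_norm[OF cl S])

lemma riesz:
  fixes f :: "'a::complex_hilbert \<Rightarrow> complex"
  assumes bl: "bounded_linear f" and hc: "\<And>c x. f (scaleC c x) = c * f x"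
  shows "\<exists>z. \<forall>x. f x = cinner x z"
proof (cases "\<forall>x. f x = 0")
  case True then show ?thesis by (auto intro: exI[of _ 0])
next
  case False
  then obtain x0 where x0: "f x0 \<noteq> 0" by auto
  have lin: "linear f" using bl by (rule bounded_linear.linear)
  define M where "M = {x. f x = 0}"
  have cl: "closed M" unfolding M_def
    by (intro closed_Collect_eq linear_continuous_on bl continuous_on_const)
  have S: "csubspace M" unfolding M_def csubspace_def
    using linear_0[OF lin] linear_add[OF lin] hc by auto
  define u where "u = x0 - cproj M x0"
  have uo: "cinner u m = 0" if "m \<in> M" for m unfolding u_def by (rule cproj(2)[OF cl S that])
  have "f (cproj M x0) = 0" using cproj(1)[OF cl S] by (simp add: M_def)
  hence fu: "f u \<noteq> 0" unfolding u_def using x0 by (simp add: linear_diff[OF lin])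
  hence u0: "u \<noteq> 0" using linear_0[OF lin] by auto
  hence uu: "cinner u u \<noteq> 0" using cinner_self_zero[of u] by simp
  have "f x = cinner x (scaleC (cnj (f u / cinner u u)) u)" for x
  proof -
    define m where "m = x - scaleC (f x / f u) u"
    have "f m = 0" unfolding m_def using fu by (simp add: linear_diff[OF lin] hc)
    hence "cinner u m = 0" by (intro uo) (simp add: M_def)
    hence "cinner m u = 0" using cinner_commute[of m u] by simp
    hence "cinner x u = (f x / f u) * cinner u u" unfolding m_def
      by (simp add: cinner_diff_left cinner_scaleC_left)
    thus ?thesis using fu uu by (simp add: cinner_scaleC_right')
  qed
  thus ?thesis by blast
qed

lemma adjoint_exists:
  fixes T :: "'a::complex_hilbert \<Rightarrow> 'a"
  assumes bT: "bounded_clinear T"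
  shows "cinner (T x) y = cinner x (cadjoint T y)"
proof -
  have "\<exists>z. \<forall>x. cinner (T x) y = cinner x z" for y
  proof (rule riesz)
    show "bounded_linear (\<lambda>x. cinner (T x) y)"
      using bounded_linear_compose[OF bounded_linear_cinner_left bcl_bl[OF bT]] by simp
    show "cinner (T (scaleC c x)) y = c * cinner (T x) y" for c x
      by (simp add: bcl_scaleC[OF bT] cinner_scaleC_left)
  qed
  then obtain S where "\<forall>y. \<forall>x. cinner (T x) y = cinner x (S y)" by metis
  hence "\<exists>S. \<forall>x y. cinner (T x) y = cinner x (S y)" by blast
  hence "\<forall>x y. cinner (T x) y = cinner x (cadjoint T y)" unfolding cadjoint_def by (rule someI_ex)
  thus ?thesis by blast
qed



lemma cms_range:
  fixes S :: "'a::complete_space set"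
  assumes cl: "closed S"
  shows "completely_metrizable_space (top_of_set S)"
proof (rule completely_metrizable_space_closedin[OF completely_metrizable_space_euclidean])
  show "closedin euclidean S" using cl closed_closedin by blast
qed

lemma baire_step:
  fixes B :: "'a::complex_hilbert \<Rightarrow> 'a"
  assumes bl: "bounded_linear B" and cl: "closed (range B)"
  shows "\<exists>n::nat. \<exists>y0 r. r > 0 \<and> y0 \<in> range B \<and> (\<forall>y\<in>range B. dist y0 y < r \<longrightarrow> y \<in> closure (B ` cball 0 (real n)))"
proof -
  let ?S = "range B"
  let ?X = "top_of_set ?S"
  define F where "F n = ?S \<inter> closure (B ` cball 0 (real n))" for n :: nat
  have cms: "completely_metrizable_space ?X" by (rule cms_range[OF cl])
  have "\<exists>n. ?X interior_of F n \<noteq> {}"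
  proof (rule ccontr)
    assume "\<not> ?thesis"
    hence emp: "\<And>n. ?X interior_of F n = {}" by blast
    have "?X interior_of \<Union>(range F) = {}"
    proof (rule Baire_category_alt)
      show "completely_metrizable_space ?X \<or> locally_compact_space ?X \<and> regular_space ?X" using cms by blast
      show "countable (range F)" by simp
      fix T assume "T \<in> range F"
      then obtain n where T: "T = F n" by blast
      show "closedin ?X T \<and> ?X interior_of T = {}"
        unfolding T using emp by (simp add: F_def closedin_closed_Int)
    qed
    moreover have "\<Union>(range F) = ?S"
    proof
      show "\<Union>(range F) \<subseteq> ?S" by (auto simp: F_def)
      show "?S \<subseteq> \<Union>(range F)"
      proof
        fix y assume "y \<in> ?S"
        then obtain x where x: "y = B x" by blast
        have "norm x \<le> real (nat \<lceil>norm x\<rceil>)" by (rule real_nat_ceiling_ge)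
        hence "x \<in> cball 0 (real (nat \<lceil>norm x\<rceil>))" by (simp only: mem_cball_0)
        hence "y \<in> B ` cball 0 (real (nat \<lceil>norm x\<rceil>))" unfolding x by (rule imageI)
        hence "y \<in> closure (B ` cball 0 (real (nat \<lceil>norm x\<rceil>)))" by (rule subsetD[OF closure_subset])
        hence "y \<in> F (nat \<lceil>norm x\<rceil>)" unfolding F_def using \<open>y \<in> ?S\<close> by (rule IntI[rotated])
        thus "y \<in> \<Union>(range F)" by (rule UN_I[OF UNIV_I])
      qed
    qed
    ultimately have "?X interior_of ?S = {}" by simp
    moreover have "?X interior_of ?S = ?S"
      using interior_of_topspace[of ?X] by simp
    ultimately show False by auto
  qed
  then obtain n y0 where y0: "y0 \<in> ?X interior_of F n" by blast
  then obtain U where U: "openin ?X U" "y0 \<in> U" "U \<subseteq> F n"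
    unfolding interior_of_def by blast
  then obtain r where r: "r > 0" "ball y0 r \<inter> ?S \<subseteq> U"
    unfolding openin_contains_ball by blast
  show ?thesis
  proof (intro exI conjI ballI impI)
    show "r > 0" by (rule r(1))
    show "y0 \<in> ?S" using U(2,3) by (auto simp: F_def)
    fix y assume "y \<in> ?S" "dist y0 y < r"
    hence "y \<in> F n" using r(2) U(3) by auto
    thus "y \<in> closure (B ` cball 0 (real n))" by (simp add: F_def)
  qed
qed

lemma approx_step:
  fixes B :: "'a::complex_hilbert \<Rightarrow> 'a"
  assumes bl: "bounded_linear B" and cl: "closed (range B)"
  shows "\<exists>c>0. \<forall>y\<in>range B. \<forall>e>0. \<exists>x. norm x \<le> c * norm y \<and> norm (y - B x) < e"
proof -
  obtain n :: nat and y0 r where r: "r > 0" and y0S: "y0 \<in> range B"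
    and cov: "\<And>y. y \<in> range B \<Longrightarrow> dist y0 y < r \<Longrightarrow> y \<in> closure (B ` cball 0 (real n))"
    using baire_step[OF bl cl] by blast
  have lin: "linear B" using bl by (rule bounded_linear.linear)
  define c where "c = 4 * real n / r + 1"
  have c0: "c > 0" using r by (simp add: c_def add_nonneg_pos)
  show ?thesis
  proof (intro exI[of _ c] conjI ballI allI impI c0)
    fix y e assume yS: "y \<in> range B" and e: "(0::real) < e"
    show "\<exists>x. norm x \<le> c * norm y \<and> norm (y - B x) < e"
    proof (cases "y = 0")
      case True
      thus ?thesis using e linear_0[OF lin] by (intro exI[of _ 0]) simp
    next
      case False
      define ny where "ny = norm y"
      have ny: "ny > 0" using False by (simp add: ny_def)
      define a where "a = r / (2 * ny)"
      have a0: "a > 0" using r ny by (simp add: a_def)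
      define y' where "y' = a *\<^sub>R y"
      obtain x0 where x0: "y = B x0" using yS by blast
      have y'S: "y' = B (a *\<^sub>R x0)" by (simp add: y'_def x0 linear_scale[OF lin])
      have ny': "norm y' = r / 2" using a0 ny r by (simp add: y'_def a_def ny_def)
      have s1: "y0 + y' \<in> range B"
      proof -
        obtain z0 where "y0 = B z0" using y0S by blast
        hence "y0 + y' = B (z0 + a *\<^sub>R x0)" by (simp add: y'S linear_add[OF lin])
        thus ?thesis by blast
      qed
      have "dist y0 (y0 + y') < r" using ny' r by (simp add: dist_norm)
      hence c1: "y0 + y' \<in> closure (B ` cball 0 (real n))" using cov s1 by blast
      have c2: "y0 \<in> closure (B ` cball 0 (real n))" using cov y0S r by simp
      define d where "d = e * a / 2"
      have d0: "d > 0" using e a0 by (simp add: d_def)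
      obtain z1 where z1: "z1 \<in> B ` cball 0 (real n)" "dist z1 (y0 + y') < d"
        using c1 d0 unfolding closure_approachable by blast
      obtain z2 where z2: "z2 \<in> B ` cball 0 (real n)" "dist z2 y0 < d"
        using c2 d0 unfolding closure_approachable by blast
      obtain x1 where x1: "z1 = B x1" "norm x1 \<le> real n" using z1(1) by auto
      obtain x2 where x2: "z2 = B x2" "norm x2 \<le> real n" using z2(1) by auto
      define x' where "x' = x1 - x2"
      have nx': "norm x' \<le> 2 * real n"
        using norm_triangle_ineq4[of x1 x2] x1(2) x2(2) by (simp add: x'_def)
      have eq: "y' - B x' = (y0 + y' - B x1) - (y0 - B x2)"
        by (simp add: x'_def linear_diff[OF lin])
      have "norm (y' - B x') \<le> norm (y0 + y' - B x1) + norm (y0 - B x2)"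
        unfolding eq by (rule norm_triangle_ineq4)
      also have "\<dots> < d + d" using z1(2) z2(2) x1(1) x2(1)
        by (simp add: dist_norm norm_minus_commute)
      finally have ne: "norm (y' - B x') < 2 * d" by simp
      define x where "x = (1 / a) *\<^sub>R x'"
      have "norm x = norm x' / a" using a0 by (simp add: x_def)
      also have "\<dots> \<le> 2 * real n / a" using nx' a0 by (simp add: divide_right_mono)
      also have "\<dots> = 4 * real n / r * ny" using r ny by (simp add: a_def field_simps)
      also have "\<dots> \<le> c * ny" using ny by (simp add: c_def distrib_right)
      finally have xb: "norm x \<le> c * norm y" by (simp add: ny_def)
      have "y - B x = (1 / a) *\<^sub>R (y' - B x')"
        using a0 by (simp add: x_def y'_def linear_scale[OF lin] scaleR_diff_right)
      hence "norm (y - B x) = norm (y' - B x') / a" using a0 by simp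
      also have "\<dots> < 2 * d / a" using ne a0 by (simp add: divide_strict_right_mono)
      also have "\<dots> = e" using a0 by (simp add: d_def)
      finally show ?thesis using xb by blast
    qed
  qed
qed



instance complex_hilbert \<subseteq> banach ..

lemma open_mapping:
  fixes B :: "'a::complex_hilbert \<Rightarrow> 'a"
  assumes bl: "bounded_linear B" and cl: "closed (range B)"
  shows "\<exists>C>0. \<forall>y\<in>range B. \<exists>x. B x = y \<and> norm x \<le> C * norm y"
proof -
  obtain c where c: "c > 0"
    and ap: "\<And>y e. y \<in> range B \<Longrightarrow> e > 0 \<Longrightarrow> \<exists>x. norm x \<le> c * norm y \<and> norm (y - B x) < e"
    using approx_step[OF bl cl] by blast
  have lin: "linear B" using bl by (rule bounded_linear.linear)
  have step: "\<forall>y\<in>range B. \<exists>x. norm x \<le> c * norm y \<and> norm (y - B x) \<le> norm y / 2"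
  proof
    fix y assume yS: "y \<in> range B"
    show "\<exists>x. norm x \<le> c * norm y \<and> norm (y - B x) \<le> norm y / 2"
    proof (cases "y = 0")
      case True thus ?thesis by (intro exI[of _ 0]) (simp add: linear_0[OF lin])
    next
      case False
      then obtain x where "norm x \<le> c * norm y" "norm (y - B x) < norm y / 2"
        using ap[OF yS, of "norm y / 2"] by auto
      thus ?thesis by (intro exI[of _ x]) auto
    qed
  qed
  then obtain X where X: "\<forall>y\<in>range B. norm (X y) \<le> c * norm y \<and> norm (y - B (X y)) \<le> norm y / 2"
    by (rule bchoice[THEN exE])
  show ?thesis
  proof (intro exI[of _ "2 * c"] conjI ballI)
    show "2 * c > 0" using c by simp
    fix y assume yS: "y \<in> range B"
    define ys where "ys = rec_nat y (\<lambda>k z. z - B (X z))"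
    have ys0: "ys 0 = y" by (simp add: ys_def)
    have ysS: "ys (Suc k) = ys k - B (X (ys k))" for k by (simp add: ys_def)
    have inS: "ys k \<in> range B" for k
    proof (induction k)
      case 0 thus ?case using yS ys0 by simp
    next
      case (Suc k)
      then obtain z where "ys k = B z" by blast
      hence "ys (Suc k) = B (z - X (ys k))" by (simp add: ysS linear_diff[OF lin])
      thus ?case by blast
    qed
    have nys: "norm (ys k) \<le> norm y / 2^k" for k
    proof (induction k)
      case 0 thus ?case by (simp add: ys0)
    next
      case (Suc k)
      have "norm (ys (Suc k)) \<le> norm (ys k) / 2" using bspec[OF X inS[of k]] by (simp add: ysS)
      also have "\<dots> \<le> norm y / 2^k / 2" using Suc.IH by (simp add: divide_right_mono)
      also have "\<dots> = norm y / 2^(Suc k)" by simp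
      finally show ?case .
    qed
    define xs where "xs k = X (ys k)" for k
    have nxs: "norm (xs k) \<le> c * norm y * (1/2)^k" for k
    proof -
      have "norm (xs k) \<le> c * norm (ys k)" using bspec[OF X inS[of k]] by (simp add: xs_def)
      also have "\<dots> \<le> c * (norm y / 2^k)" by (rule mult_left_mono[OF nys]) (use c in simp)
      also have "\<dots> = c * norm y * (1/2)^k" by (simp add: power_one_over)
      finally show ?thesis .
    qed
    have sg: "summable (\<lambda>k. c * norm y * (1/2::real)^k)"
      by (intro summable_mult summable_geometric) simp
    have sn: "summable (\<lambda>k. norm (xs k))"
      by (rule summable_comparison_test'[OF sg]) (simp add: nxs)
    have sx: "summable xs" by (rule summable_norm_cancel[OF sn])
    have part: "B (\<Sum>i<n. xs i) = y - ys n" for n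
    proof (induction n)
      case 0 thus ?case by (simp add: ys0 linear_0[OF lin])
    next
      case (Suc n) thus ?case by (simp add: linear_add[OF lin] ysS xs_def)
    qed
    have "(\<lambda>n. norm y / 2^n) \<longlonglongrightarrow> 0" by (rule LIMSEQ_divide_realpow_zero) simp
    moreover have "\<forall>\<^sub>F n in sequentially. norm (ys n) \<le> norm y / 2^n"
      using nys by (simp add: always_eventually)
    ultimately have "ys \<longlonglongrightarrow> 0" using Lim_null_comparison[of ys "\<lambda>n. norm y / 2^n" sequentially] by blast
    hence "(\<lambda>n. y - ys n) \<longlonglongrightarrow> y - 0" by (intro tendsto_diff tendsto_const)
    hence l1: "(\<lambda>n. B (\<Sum>i<n. xs i)) \<longlonglongrightarrow> y" by (simp add: part)
    have l2: "(\<lambda>n. B (\<Sum>i<n. xs i)) \<longlonglongrightarrow> B (suminf xs)"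
      by (rule bounded_linear.tendsto[OF bl summable_LIMSEQ[OF sx]])
    have Bx: "B (suminf xs) = y" using LIMSEQ_unique[OF l2 l1] .
    have "norm (suminf xs) \<le> (\<Sum>k. norm (xs k))" by (rule summable_norm[OF sn])
    also have "\<dots> \<le> (\<Sum>k. c * norm y * (1/2)^k)" by (rule suminf_le[OF _ sn sg]) (simp add: nxs)
    also have "\<dots> = c * norm y * (\<Sum>k. (1/2::real)^k)" by (rule suminf_mult) simp
    also have "(\<Sum>k. (1/2::real)^k) = 2" by (subst suminf_geometric) simp_all
    finally show "\<exists>x. B x = y \<and> norm x \<le> 2 * c * norm y" using Bx
      by (intro exI[of _ "suminf xs"]) (simp add: mult_ac)
  qed
qed

lemma right_inverse:
  fixes B Q :: "'a::complex_hilbert \<Rightarrow> 'a"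
  assumes bB: "bounded_clinear B" and cl: "closed (range B)" and bQ: "bounded_clinear Q"
    and rQ: "range Q \<subseteq> range B"
  shows "\<exists>G. bounded_clinear G \<and> (\<forall>y. B (G y) = Q y)"
proof -
  have blB: "bounded_linear B" by (rule bcl_bl[OF bB])
  have lin: "linear B" using blB by (rule bounded_linear.linear)
  obtain C where C: "C > 0" and om: "\<And>y. y \<in> range B \<Longrightarrow> \<exists>x. B x = y \<and> norm x \<le> C * norm y"
    using open_mapping[OF blB cl] by blast
  define M where "M = {x. B x = 0}"
  have clM: "closed M" unfolding M_def
    by (intro closed_Collect_eq linear_continuous_on blB continuous_on_const)
  have SM: "csubspace M" unfolding M_def csubspace_def
    using linear_0[OF lin] linear_add[OF lin] bcl_scaleC[OF bB] by auto
  define h where "h x = x - cproj M x" for x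
  have hadd: "h (x + y) = h x + h y" for x y by (simp add: h_def cproj_add[OF clM SM])
  have hsc: "h (scaleC c x) = scaleC c (h x)" for c x
    by (simp add: h_def cproj_scaleC[OF clM SM] scaleC_diff_right)
  have hB: "B (h x) = B x" for x
  proof -
    have "cproj M x \<in> M" by (rule cproj(1)[OF clM SM])
    thus ?thesis by (simp add: h_def linear_diff[OF lin] M_def)
  qed
  have hn: "norm (h x) \<le> norm x" for x unfolding h_def by (rule cproj_norm(2)[OF clM SM])
  have hwell: "h x = h x'" if "B x = B x'" for x x'
  proof -
    have "x - x' \<in> M" using that by (simp add: M_def linear_diff[OF lin])
    hence "h (x - x') = 0" by (simp add: h_def cproj_fixed[OF clM SM])
    moreover have "h x = h (x - x') + h x'" by (simp flip: hadd)
    ultimately show ?thesis by simp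
  qed
  define \<sigma> where "\<sigma> y = (SOME x. B x = y)" for y
  have Bs: "B (\<sigma> (Q y)) = Q y" for y
  proof -
    have "Q y \<in> range B" using rQ by blast
    then obtain x where "Q y = B x" by blast
    hence "\<exists>x. B x = Q y" by (intro exI[of _ x]) simp
    thus ?thesis unfolding \<sigma>_def by (rule someI_ex)
  qed
  define G where "G y = h (\<sigma> (Q y))" for y
  obtain K where K: "\<And>y. norm (Q y) \<le> norm y * K"
    using bounded_linear.bounded[OF bcl_bl[OF bQ]] by blast
  have "bounded_clinear G"
  proof (rule bounded_clinear_intro[where K="C * K"])
    fix y1 y2
    have "B (\<sigma> (Q (y1 + y2))) = Q (y1 + y2)" by (rule Bs)
    also have "\<dots> = Q y1 + Q y2" by (rule linear_add[OF bounded_linear.linear[OF bcl_bl[OF bQ]]])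
    also have "\<dots> = B (\<sigma> (Q y1) + \<sigma> (Q y2))" by (simp add: Bs linear_add[OF lin])
    finally have "B (\<sigma> (Q (y1 + y2))) = B (\<sigma> (Q y1) + \<sigma> (Q y2))" .
    hence "h (\<sigma> (Q (y1 + y2))) = h (\<sigma> (Q y1) + \<sigma> (Q y2))" by (rule hwell)
    thus "G (y1 + y2) = G y1 + G y2" by (simp add: G_def hadd)
  next
    fix c y
    have "B (\<sigma> (Q (scaleC c y))) = Q (scaleC c y)" by (rule Bs)
    also have "\<dots> = scaleC c (Q y)" by (rule bcl_scaleC[OF bQ])
    also have "\<dots> = B (scaleC c (\<sigma> (Q y)))" by (simp add: Bs bcl_scaleC[OF bB])
    finally have "B (\<sigma> (Q (scaleC c y))) = B (scaleC c (\<sigma> (Q y)))" .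
    hence "h (\<sigma> (Q (scaleC c y))) = h (scaleC c (\<sigma> (Q y)))" by (rule hwell)
    thus "G (scaleC c y) = scaleC c (G y)" by (simp add: G_def hsc)
  next
    fix y
    obtain x where x: "B x = Q y" "norm x \<le> C * norm (Q y)" using om[of "Q y"] rQ by blast
    have "G y = h x" unfolding G_def by (rule hwell) (simp add: Bs x)
    hence "norm (G y) \<le> norm x" using hn by simp
    also have "\<dots> \<le> C * norm (Q y)" by (rule x(2))
    also have "\<dots> \<le> C * (norm y * K)" using K[of y] C by (simp add: mult_left_mono)
    finally show "norm (G y) \<le> norm y * (C * K)" by (simp add: mult_ac)
  qed
  moreover have "B (G y) = Q y" for y by (simp add: G_def hB Bs)
  ultimately show ?thesis by blast
qed



lemma expand_A:
  fixes A :: "'a::complex_inner \<Rightarrow> 'a"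
  assumes lin: "linear A"
  shows "cinner (A (u + v)) (u + v) = cinner (A u) u + cinner (A u) v + cinner (A v) u + cinner (A v) v"
  by (simp add: linear_add[OF lin] cinner_add_left cinner_add_right)

lemma positive_herm:
  fixes A :: "'a::complex_inner \<Rightarrow> 'a"
  assumes lin: "linear A" and hc: "\<And>c x. A (scaleC c x) = scaleC c (A x)"
    and re: "\<And>x. Im (cinner (A x) x) = 0"
  shows "cinner (A x) y = cnj (cinner (A y) x)"
proof -
  have i1: "Im (cinner (A x) y + cinner (A y) x) = 0"
    using re[of "x + y"] re[of x] re[of y] expand_A[OF lin, of x y] by simp
  have e1: "cinner (A x) (scaleC \<i> y) = - \<i> * cinner (A x) y" by (simp add: cinner_scaleC_right')
  have e2: "cinner (A (scaleC \<i> y)) x = \<i> * cinner (A y) x" by (simp add: hc cinner_scaleC_left)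
  have e3: "cinner (A (scaleC \<i> y)) (scaleC \<i> y) = cinner (A y) y"
    by (simp add: hc cinner_scaleC_left cinner_scaleC_right')
  have i2: "Re (cinner (A y) x) - Re (cinner (A x) y) = 0"
    using re[of "x + scaleC \<i> y"] re[of x] re[of y] expand_A[OF lin, of x "scaleC \<i> y"] e1 e2 e3 by simp
  show ?thesis using i1 i2 by (simp add: complex_eq_iff)
qed

theorem mainTheorem13:
  fixes A B :: "'a::complex_hilbert \<Rightarrow> 'a"
  assumes "separable_type TYPE('a)"
    and "positive_op A"
    and "bounded_clinear B"
    and "closed (range B)"
  shows "(\<exists>G. is_A_inverse A B G) \<longleftrightarrow> compatible A (range B)"
proof -
  have bA: "bounded_clinear A" and reA: "\<And>x. Im (cinner (A x) x) = 0"
    and posA: "\<And>x. 0 \<le> Re (cinner (A x) x)"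
    using assms(2) by (auto simp: positive_op_def)
  have bB: "bounded_clinear B" and cl: "closed (range B)" using assms(3,4) by auto
  have linA: "linear A" by (rule bounded_linear.linear[OF bcl_bl[OF bA]])
  have linB: "linear B" by (rule bounded_linear.linear[OF bcl_bl[OF bB]])
  have hcA: "\<And>c x. A (scaleC c x) = scaleC c (A x)" by (rule bcl_scaleC[OF bA])
  have herm: "\<And>x y. cinner (A x) y = cnj (cinner (A y) x)"
    by (rule positive_herm[OF linA hcA reA])
  have A0: "A 0 = 0" by (rule linear_0[OF linA])
  have SB: "csubspace (range B)" unfolding csubspace_def
  proof (intro conjI ballI allI)
    show "0 \<in> range B" using linear_0[OF linB] by (metis rangeI)
    fix u v assume "u \<in> range B" "v \<in> range B"
    then obtain a b where "u = B a" "v = B b" by blast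
    thus "u + v \<in> range B" by (metis linear_add[OF linB] rangeI)
  next
    fix c u assume "u \<in> range B"
    then obtain a where "u = B a" by blast
    thus "scaleC c u \<in> range B" by (metis bcl_scaleC[OF bB] rangeI)
  qed
  show ?thesis
  proof
    assume "\<exists>G. is_A_inverse A B G"
    then obtain G where bG: "bounded_clinear G"
      and mn: "\<And>y x. A_norm A (y - B (G y)) \<le> A_norm A (y - B x)"
      unfolding is_A_inverse_def by blast
    have orth: "cinner (A (y - B (G y))) w = 0" if w: "w \<in> range B" for y w
    proof (rule variational[OF linA hcA herm SB _ w])
      fix w' assume "w' \<in> range B"
      then obtain x where x: "w' = B x" by blast
      have e: "y - B (G y) - w' = y - B (G y + x)" by (simp add: x linear_add[OF linB])
      have "A_norm A (y - B (G y)) \<le> A_norm A (y - B (G y + x))" by (rule mn)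
      hence "Re (cinner (A (y - B (G y))) (y - B (G y)))
          \<le> Re (cinner (A (y - B (G y + x))) (y - B (G y + x)))"
        by (simp add: A_norm_def)
      thus "Re (cinner (A (y - B (G y))) (y - B (G y)))
          \<le> Re (cinner (A (y - B (G y) - w')) (y - B (G y) - w'))"
        by (simp only: e)
    qed
    have ker: "A z = 0" if z: "Re (cinner (A z) z) = 0" for z
    proof -
      have SU: "csubspace (UNIV :: 'a set)" by (simp add: csubspace_def)
      have "cinner (A z) (A z) = 0"
      proof (rule variational[OF linA hcA herm SU])
        fix w show "Re (cinner (A z) z) \<le> Re (cinner (A (z - w)) (z - w))" using z posA[of "z - w"] by simp
      qed simp
      thus ?thesis using cinner_self_zero[of "A z"] by simp
    qed
    define N where "N = range B \<inter> {s. A s = 0}"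
    have clN: "closed N" unfolding N_def
      by (intro closed_Int cl closed_Collect_eq linear_continuous_on bcl_bl[OF bA] continuous_on_const)
    have SN: "csubspace N" unfolding N_def csubspace_def
      using SB A0 linear_add[OF linA] hcA by (auto simp: csubspace_def)
    define Q where "Q = (\<lambda>y. B (G y) + cproj N (y - B (G y)))"
    have PN: "cproj N v \<in> N" for v by (rule cproj(1)[OF clN SN])
    have AP: "A (cproj N v) = 0" for v using PN[of v] by (simp add: N_def)
    have EB: "B (G y) \<in> range B" for y by blast
    have QS: "Q y \<in> range B" for y
      unfolding Q_def using PN[of "y - B (G y)"] by (intro csubspace_add[OF SB EB]) (simp add: N_def)
    have Qfix: "Q s = s" if s: "s \<in> range B" for s
    proof -
      have d: "s - B (G s) \<in> range B" by (rule csubspace_diff[OF SB s EB])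
      have "cinner (A (s - B (G s))) (s - B (G s)) = 0" by (rule orth[OF d])
      hence "A (s - B (G s)) = 0" by (intro ker) simp
      hence "s - B (G s) \<in> N" using d by (simp add: N_def)
      hence "cproj N (s - B (G s)) = s - B (G s)" by (rule cproj_fixed[OF clN SN])
      thus ?thesis by (simp add: Q_def)
    qed
    have bQ: "bounded_clinear Q" unfolding Q_def
      by (intro bcl_add bcl_compose[OF bB bG] bcl_compose[OF bcl_cproj[OF clN SN]]
            bcl_diff bcl_id)
    have QQ: "Q \<circ> Q = Q" by (rule ext) (simp add: Qfix[OF QS])
    have rQ: "range Q = range B"
    proof
      show "range Q \<subseteq> range B" using QS by blast
      show "range B \<subseteq> range Q"
      proof
        fix s assume "s \<in> range B"
        hence "s = Q s" by (simp add: Qfix)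
        thus "s \<in> range Q" by (metis rangeI)
      qed
    qed
    have K: "cinner (A z) (Q u) = cinner (A (Q z)) u" for z u
    proof -
      have k1: "cinner (A z) (cproj N (u - B (G u))) = 0"
        using herm[of z "cproj N (u - B (G u))"] AP by simp
      have k2: "cinner (A (z - B (G z))) (B (G u)) = 0" by (rule orth[OF EB])
      have k3: "cinner (A (u - B (G u))) (B (G z)) = 0" by (rule orth[OF EB])
      have k4: "cinner (A (B (G z))) (u - B (G u)) = 0"
        using herm[of "B (G z)" "u - B (G u)"] k3 by simp
      have "cinner (A z) (Q u) = cinner (A z) (B (G u))"
        by (simp add: Q_def cinner_add_right k1)
      also have "\<dots> = cinner (A (z - B (G z))) (B (G u)) + cinner (A (B (G z))) (B (G u))"
        by (simp add: linear_diff[OF linA] cinner_diff_left)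
      also have "\<dots> = cinner (A (B (G z))) (B (G u))" by (simp add: k2)
      also have "\<dots> = cinner (A (B (G z))) u - cinner (A (B (G z))) (u - B (G u))"
        by (simp add: cinner_diff_right)
      also have "\<dots> = cinner (A (B (G z))) u" by (simp add: k4)
      also have "\<dots> = cinner (A (Q z)) u"
        by (simp add: Q_def linear_add[OF linA] AP cinner_add_left)
      finally show ?thesis .
    qed
    have AQ: "A \<circ> Q = cadjoint Q \<circ> A"
    proof (rule ext)
      fix u
      show "(A \<circ> Q) u = (cadjoint Q \<circ> A) u"
      proof (simp only: comp_apply, rule cinner_ext_right)
        fix z
        have "cinner z (A (Q u)) = cnj (cinner (A (Q u)) z)" by (rule cinner_commute)
        also have "\<dots> = cinner (A z) (Q u)" using herm[of "Q u" z] by simp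
        also have "\<dots> = cinner (A (Q z)) u" by (rule K)
        also have "\<dots> = cnj (cinner (A u) (Q z))" by (rule herm)
        also have "\<dots> = cinner (Q z) (A u)" by (rule cinner_commute[symmetric])
        also have "\<dots> = cinner z (cadjoint Q (A u))" by (rule adjoint_exists[OF bQ])
        finally show "cinner z (A (Q u)) = cinner z (cadjoint Q (A u))" .
      qed
    qed
    show "compatible A (range B)" unfolding compatible_def
      using bQ QQ rQ AQ by blast
  next
    assume "compatible A (range B)"
    then obtain Q where bQ: "bounded_clinear Q" and QQ: "Q \<circ> Q = Q" and rQ: "range Q = range B"
      and AQ: "A \<circ> Q = cadjoint Q \<circ> A"
      unfolding compatible_def by blast
    have linQ: "linear Q" by (rule bounded_linear.linear[OF bcl_bl[OF bQ]])
    have sym: "cinner (A (Q u)) x = cinner (A u) (Q x)" for u x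
    proof -
      have "A (Q u) = cadjoint Q (A u)" using fun_cong[OF AQ, of u] by simp
      hence "cinner (A (Q u)) x = cinner (cadjoint Q (A u)) x" by simp
      also have "\<dots> = cnj (cinner x (cadjoint Q (A u)))" by (rule cinner_commute)
      also have "\<dots> = cnj (cinner (Q x) (A u))" by (simp only: adjoint_exists[OF bQ])
      also have "\<dots> = cinner (A u) (Q x)" by (rule cinner_commute[symmetric])
      finally show ?thesis .
    qed
    have QQy: "Q (Q y) = Q y" for y using fun_cong[OF QQ, of y] by simp
    obtain G where bG: "bounded_clinear G" and BG: "\<And>y. B (G y) = Q y"
      using right_inverse[OF bB cl bQ] rQ by blast
    have "is_A_inverse A B G" unfolding is_A_inverse_def
    proof (intro conjI allI bG)
      fix y x
      define r where "r = y - Q y"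
      define w where "w = Q y - B x"
      have "B x \<in> range Q" using rQ by blast
      then obtain z2 where z2: "B x = Q z2" by blast
      have wQ: "w = Q (y - z2)" by (simp add: w_def z2 linear_diff[OF linQ])
      have Qr: "Q r = 0" by (simp add: r_def linear_diff[OF linQ] QQy)
      have o1: "cinner (A r) w = 0"
        using sym[of r "y - z2"] by (simp add: wQ Qr A0)
      have o2: "cinner (A w) r = 0" using herm[of w r] o1 by simp
      have eq: "y - B x = r + w" by (simp add: r_def w_def)
      have "Re (cinner (A r) r) \<le> Re (cinner (A (r + w)) (r + w))"
        using expand_A[OF linA, of r w] o1 o2 posA[of w] by simp
      hence "sqrt (Re (cinner (A r) r)) \<le> sqrt (Re (cinner (A (y - B x)) (y - B x)))"
        by (simp add: eq)
      thus "A_norm A (y - B (G y)) \<le> A_norm A (y - B x)"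
        by (simp add: A_norm_def BG r_def)
    qed
    thus "\<exists>G. is_A_inverse A B G" by blast
  qed
qed


end
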